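(* Let $N\ge2$, $\gamma>\tfrac12$, and let $\Gamma$ satisfy (A1) and (A2) with this $\gamma$ and constant $C_1>0$. Let the communication weight $\psi:(0,\infty)\to(0,\infty)$ be nonincreasing and have a primitive $\Psi$ (so $\Psi'=\psi$) that is singular at $0$, i.e. $|\Psi(s)|\to\infty$ as $s\to0^+$, and suppose there are constants $C>0$ and $\beta\in[0,1)$ with $$\Psi'(s)\le C\,|\Psi(s)|^{(1-\beta)2\gamma/(2\gamma-1)}\qquad\text{for all } s>0.$$ Let the initial data satisfy $x_{i0}\ne x_{j0}$ for $i\ne j$. Then any solution of the NL CS system remains non-collisional for $t>0$, and for all $t$ in its interval of existence: if $\beta>0$, $$\mathcal{L}^\beta(t)+\frac{\beta}{2C_1\gamma(N-1)}\sum_i|v_i(t)|^2\le C\,\frac{(2\gamma-1)\beta}{2\gamma}\,t+\mathcal{L}^\beta(0)+\frac{\beta}{2C_1\gamma(N-1)}\sum_i|v_{i0}|^2,$$ and if $\beta=0$, $$\mathcal{L}^0(t)+\frac{1}{2C_1\gamma(N-1)}\sum_i|v_i(t)|^2\le C\,\frac{2\gamma-1}{2\gamma}\,t+\mathcal{L}^0(0)+\frac{1}{2C_1\gamma(N-1)}\sum_i|v_{i0}|^2.$$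
   Context: The NL CS system: $\frac{d}{dt}x_i=v_i$, $\frac{d}{dt}v_i=\frac1N\sum_{j=1}^N\psi(|x_i-x_j|)\Gamma(v_j-v_i)$, $i=1,\dots,N$, with $x_i,v_i\in\mathbb{R}^d$ and initial data $(x_{i0},v_{i0})$; a solution is a $C^1$ solution on an interval on which $x_i(t)\ne x_j(t)$ for $i\ne j$. (A1): $\Gamma(-v)=-\Gamma(v)$ for all $v\in\mathbb{R}^d$. (A2): $\langle\Gamma(v),v\rangle\ge C_1|v|^{2\gamma}$ for all $v\in\mathbb{R}^d$. Sums $\sum_{i\ne j}$ are over ordered pairs $i\ne j$ in $\{1,\dots,N\}$. Define $$\mathcal{L}^\beta(t)=\frac{1}{N(N-1)}\sum_{i\ne j}|\Psi(|x_i(t)-x_j(t)|)|^\beta\ (\beta>0),\qquad \mathcal{L}^0(t)=\frac{1}{N(N-1)}\sum_{i\ne j}\log|\Psi(|x_i(t)-x_j(t)|)|.$$ *)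

theory Defs
  imports "HOL-Analysis.Analysis"
begin

definition CS_force ::
  "nat \<Rightarrow> (real \<Rightarrow> real) \<Rightarrow> ('a::euclidean_space \<Rightarrow> 'a) \<Rightarrow> (nat \<Rightarrow> real \<Rightarrow> 'a) \<Rightarrow> (nat \<Rightarrow> real \<Rightarrow> 'a) \<Rightarrow> nat \<Rightarrow> real \<Rightarrow> 'a"
  where "CS_force N psi Gam x v i t =
     (1 / real N) *\<^sub>R (\<Sum>j<N. psi (norm (x i t - x j t)) *\<^sub>R Gam (v j t - v i t))"

definition CS_solution ::
  "nat \<Rightarrow> (real \<Rightarrow> real) \<Rightarrow> ('a::euclidean_space \<Rightarrow> 'a) \<Rightarrow> real \<Rightarrow> (nat \<Rightarrow> real \<Rightarrow> 'a) \<Rightarrow> (nat \<Rightarrow> real \<Rightarrow> 'a) \<Rightarrow> bool"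
  where "CS_solution N psi Gam T x v \<longleftrightarrow>
     (\<forall>t\<in>{0..<T}. \<forall>i<N. \<forall>j<N. i \<noteq> j \<longrightarrow> x i t \<noteq> x j t) \<and>
     (\<forall>i<N. \<forall>t\<in>{0..<T}. (x i has_vector_derivative v i t) (at t within {0..<T})) \<and>
     (\<forall>i<N. \<forall>t\<in>{0..<T}. (v i has_vector_derivative CS_force N psi Gam x v i t) (at t within {0..<T})) \<and>
     (\<forall>i<N. continuous_on {0..<T} (v i)) \<and>
     (\<forall>i<N. continuous_on {0..<T} (CS_force N psi Gam x v i))"

definition L_beta ::
  "real \<Rightarrow> nat \<Rightarrow> (real \<Rightarrow> real) \<Rightarrow> (nat \<Rightarrow> real \<Rightarrow> 'a::euclidean_space) \<Rightarrow> real \<Rightarrow> real"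
  where "L_beta \<beta> N Psi x t =
     (1 / (real N * (real N - 1))) *
       (\<Sum>i<N. \<Sum>j\<in>{..<N} - {i}. \<bar>Psi (norm (x i t - x j t))\<bar> powr \<beta>)"

definition L_zero ::
  "nat \<Rightarrow> (real \<Rightarrow> real) \<Rightarrow> (nat \<Rightarrow> real \<Rightarrow> 'a::euclidean_space) \<Rightarrow> real \<Rightarrow> real"
  where "L_zero N Psi x t =
     (1 / (real N * (real N - 1))) *
       (\<Sum>i<N. \<Sum>j\<in>{..<N} - {i}. ln \<bar>Psi (norm (x i t - x j t))\<bar>)"

end

theory Submission
  imports Defs
begin

locale cs =
  fixes N :: nat and \<gamma> C\<^sub>1 C \<beta> T :: real
    and Gam :: "'a::euclidean_space \<Rightarrow> 'a"
    and psi Psi :: "real \<Rightarrow> real"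
    and x v :: "nat \<Rightarrow> real \<Rightarrow> 'a"
  assumes N2: "N \<ge> 2"
    and gamma: "\<gamma> > 1/2"
    and C1_pos: "C\<^sub>1 > 0"
    and A1: "\<forall>w. Gam (- w) = - Gam w"
    and A2: "\<forall>w. inner (Gam w) w \<ge> C\<^sub>1 * norm w powr (2 * \<gamma>)"
    and psi_pos: "\<forall>s>0. psi s > 0"
    and psi_noninc: "\<forall>s r. 0 < s \<longrightarrow> s \<le> r \<longrightarrow> psi r \<le> psi s"
    and Psi_prim: "\<forall>s>0. (Psi has_real_derivative psi s) (at s)"
    and Psi_sing: "filterlim (\<lambda>s. \<bar>Psi s\<bar>) at_top (at_right 0)"
    and C_pos: "C > 0"
    and beta: "0 \<le> \<beta>" "\<beta> < 1"
    and growth: "\<forall>s>0. psi s \<le> C * \<bar>Psi s\<bar> powr ((1 - \<beta>) * (2 * \<gamma>) / (2 * \<gamma> - 1))"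
    and T_pos: "T > 0"
    and sol: "CS_solution N psi Gam T x v"
begin

lemma Psi_mono: assumes "0 < s" "s \<le> r" shows "Psi s \<le> Psi r"
proof (cases "s = r")
  case False
  then have "s < r" using assms by auto
  then have "Psi s < Psi r"
    by (rule DERIV_pos_imp_increasing) (metis assms(1) Psi_prim psi_pos less_le_trans)
  then show ?thesis by simp
qed simp

lemma Psi_nz: assumes "0 < s" shows "Psi s \<noteq> 0"
proof
  assume "Psi s = 0"
  have e: "(1 - \<beta>) * (2 * \<gamma>) / (2 * \<gamma> - 1) > 0" using beta gamma by auto
  from growth assms have "psi s \<le> C * \<bar>Psi s\<bar> powr ((1 - \<beta>) * (2 * \<gamma>) / (2 * \<gamma> - 1))" by auto
  with \<open>Psi s = 0\<close> have "psi s \<le> 0" by simp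
  with psi_pos assms show False by auto
qed

lemma Psi_neg: assumes "0 < s" shows "Psi s < 0"
proof (rule ccontr)
  assume "\<not> Psi s < 0"
  with Psi_nz assms have pos: "Psi s > 0" by force
  have "\<forall>\<^sub>F r in at_right 0. \<bar>Psi r\<bar> > Psi s"
    using Psi_sing by (simp add: filterlim_at_top_dense)
  moreover have "\<forall>\<^sub>F r in at_right 0. r < s \<and> r > 0"
    using assms eventually_at_right_real[of 0 s] eventually_at_right_less[of 0] by (auto elim: eventually_mono)
  ultimately have "\<forall>\<^sub>F r in at_right (0::real). \<bar>Psi r\<bar> > Psi s \<and> r < s \<and> r > 0"
    by (rule eventually_conj)
  then have "\<exists>r. \<bar>Psi r\<bar> > Psi s \<and> r < s \<and> r > 0"
    using eventually_happens trivial_limit_at_right_real by blast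
  then obtain r where r: "\<bar>Psi r\<bar> > Psi s" "r < s" "r > 0" by blast
  have "Psi r \<le> Psi s" using Psi_mono r by auto
  with r pos have "Psi r < 0" by auto
  have "\<forall>y. r \<le> y \<and> y \<le> s \<longrightarrow> isCont Psi y"
    using Psi_prim r DERIV_isCont less_le_trans by blast
  then obtain z where z: "z \<ge> r" "z \<le> s" "Psi z = 0"
    using IVT[of Psi r 0 s] \<open>Psi r < 0\<close> pos r by auto
  with Psi_nz r show False by auto
qed


lemma noncoll: "t \<in> {0..<T} \<Longrightarrow> i < N \<Longrightarrow> j < N \<Longrightarrow> i \<noteq> j \<Longrightarrow> x i t \<noteq> x j t"
  using sol unfolding CS_solution_def by blast
lemma xder: "i < N \<Longrightarrow> t \<in> {0..<T} \<Longrightarrow> (x i has_vector_derivative v i t) (at t within {0..<T})"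
  using sol unfolding CS_solution_def by blast
lemma vder: "i < N \<Longrightarrow> t \<in> {0..<T} \<Longrightarrow> (v i has_vector_derivative CS_force N psi Gam x v i t) (at t within {0..<T})"
  using sol unfolding CS_solution_def by blast

lemma vd_inner:
  fixes f :: "real \<Rightarrow> 'b::real_inner"
  assumes "(f has_vector_derivative f') (at t within S)"
  shows "((\<lambda>t. inner (f t) (f t)) has_real_derivative 2 * inner (f t) f') (at t within S)"
proof -
  have "((\<lambda>t. inner (f t) (f t)) has_derivative (\<lambda>h. inner (f t) (h *\<^sub>R f') + inner (h *\<^sub>R f') (f t))) (at t within S)"
    using assms unfolding has_vector_derivative_def by (intro has_derivative_inner) 
  then show ?thesis unfolding has_field_derivative_def
    by (rule has_derivative_eq_rhs) (auto simp: fun_eq_iff inner_commute algebra_simps)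
qed

lemma r_der:
  assumes ij: "i < N" "j < N" "i \<noteq> j" and t: "t \<in> {0..<T}"
  shows "((\<lambda>t. norm (x i t - x j t)) has_real_derivative
           inner (x i t - x j t) (v i t - v j t) / norm (x i t - x j t)) (at t within {0..<T})"
proof -
  have d: "((\<lambda>t. x i t - x j t) has_vector_derivative (v i t - v j t)) (at t within {0..<T})"
    using xder[OF ij(1) t] xder[OF ij(2) t] by (rule has_vector_derivative_diff)
  have pos: "0 < inner (x i t - x j t) (x i t - x j t)"
    using noncoll[OF t ij] by simp
  have "((\<lambda>t. sqrt (inner (x i t - x j t) (x i t - x j t))) has_real_derivative
          inverse (sqrt (inner (x i t - x j t) (x i t - x j t))) / 2 * (2 * inner (x i t - x j t) (v i t - v j t)))
          (at t within {0..<T})"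
    by (rule DERIV_chain2[OF DERIV_real_sqrt[OF pos] vd_inner[OF d]])
  then show ?thesis unfolding norm_eq_sqrt_inner[symmetric]
    by (rule DERIV_cong) (simp add: field_simps)
qed

lemma r_bound:
  "inner (x i t - x j t) (v i t - v j t) / norm (x i t - x j t) \<ge> - norm (v j t - v i t)"
proof -
  have "\<bar>inner (x i t - x j t) (v i t - v j t)\<bar> \<le> norm (x i t - x j t) * norm (v i t - v j t)"
    by (rule Cauchy_Schwarz_ineq2)
  moreover have "norm (v i t - v j t) = norm (v j t - v i t)" by (rule norm_minus_commute)
  ultimately have "- (norm (x i t - x j t) * norm (v j t - v i t)) \<le> inner (x i t - x j t) (v i t - v j t)"
    by (smt (verit))
  then show ?thesis
    by (cases "norm (x i t - x j t) = 0") (simp_all add: le_divide_eq mult.commute)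
qed

lemma g_der:
  assumes ij: "i < N" "j < N" "i \<noteq> j" and t: "t \<in> {0..<T}"
  shows "((\<lambda>t. \<bar>Psi (norm (x i t - x j t))\<bar>) has_real_derivative
      - (psi (norm (x i t - x j t)) * (inner (x i t - x j t) (v i t - v j t) / norm (x i t - x j t))))
      (at t within {0..<T})"
    and "- (psi (norm (x i t - x j t)) * (inner (x i t - x j t) (v i t - v j t) / norm (x i t - x j t)))
         \<le> psi (norm (x i t - x j t)) * norm (v j t - v i t)"
    and "\<bar>Psi (norm (x i t - x j t))\<bar> > 0"
proof -
  have rp: "0 < norm (x i t - x j t)" using noncoll[OF t ij] by simp
  have "((\<lambda>t. Psi (norm (x i t - x j t))) has_real_derivative
      psi (norm (x i t - x j t)) * (inner (x i t - x j t) (v i t - v j t) / norm (x i t - x j t)))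
      (at t within {0..<T})"
    by (rule DERIV_chain2[OF Psi_prim[rule_format, OF rp] r_der[OF ij t]])
  then have "((\<lambda>t. - Psi (norm (x i t - x j t))) has_real_derivative
      - (psi (norm (x i t - x j t)) * (inner (x i t - x j t) (v i t - v j t) / norm (x i t - x j t))))
      (at t within {0..<T})"
    by (rule DERIV_minus)
  then show "((\<lambda>t. \<bar>Psi (norm (x i t - x j t))\<bar>) has_real_derivative
      - (psi (norm (x i t - x j t)) * (inner (x i t - x j t) (v i t - v j t) / norm (x i t - x j t))))
      (at t within {0..<T})"
  proof (rule has_field_derivative_transform_within[where d=1])
    fix s assume "s \<in> {0..<T}"
    then have "0 < norm (x i s - x j s)" using noncoll[OF _ ij] by simp
    then show "- Psi (norm (x i s - x j s)) = \<bar>Psi (norm (x i s - x j s))\<bar>"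
      using Psi_neg[of "norm (x i s - x j s)"] by linarith
  qed (use t in simp_all)
  show "\<bar>Psi (norm (x i t - x j t))\<bar> > 0" using Psi_neg[OF rp] by simp
  have "psi (norm (x i t - x j t)) > 0" using psi_pos rp by auto
  then show "- (psi (norm (x i t - x j t)) * (inner (x i t - x j t) (v i t - v j t) / norm (x i t - x j t)))
         \<le> psi (norm (x i t - x j t)) * norm (v j t - v i t)"
  proof -
    have "psi (norm (x i t - x j t)) * (- norm (v j t - v i t)) \<le> psi (norm (x i t - x j t)) * (inner (x i t - x j t) (v i t - v j t) / norm (x i t - x j t))"
      using r_bound \<open>psi (norm (x i t - x j t)) > 0\<close> by (intro mult_left_mono) auto
    then show ?thesis by linarith
  qed
qed


lemma E_der:
  assumes t: "t \<in> {0..<T}"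
  shows "((\<lambda>t. \<Sum>i<N. (norm (v i t))\<^sup>2) has_real_derivative
           (\<Sum>i<N. 2 * inner (v i t) (CS_force N psi Gam x v i t))) (at t within {0..<T})"
  unfolding power2_norm_eq_inner
  by (rule DERIV_sum) (rule vd_inner[OF vder[OF _ t]], simp)

lemma E_ident:
  "(\<Sum>i<N. 2 * inner (v i t) (CS_force N psi Gam x v i t)) =
     - (1 / real N) * (\<Sum>i<N. \<Sum>j<N. psi (norm (x i t - x j t)) * inner (Gam (v j t - v i t)) (v j t - v i t))"
proof -
  define a where "a i j = psi (norm (x i t - x j t)) * inner (v i t) (Gam (v j t - v i t))" for i j
  have 1: "(\<Sum>i<N. 2 * inner (v i t) (CS_force N psi Gam x v i t)) = 2 / real N * (\<Sum>i<N. \<Sum>j<N. a i j)"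
    by (simp add: CS_force_def a_def inner_sum_right sum_distrib_left)
  have sw: "(\<Sum>i<N. \<Sum>j<N. a i j) = (\<Sum>i<N. \<Sum>j<N. a j i)" by (rule sum.swap)
  have aji: "a i j + a j i = - (psi (norm (x i t - x j t)) * inner (Gam (v j t - v i t)) (v j t - v i t))" for i j
  proof -
    have "Gam (v i t - v j t) = - Gam (v j t - v i t)"
      using A1[rule_format, of "v j t - v i t"] by simp
    then show ?thesis by (simp add: a_def norm_minus_commute inner_diff_right inner_commute algebra_simps)
  qed
  have "2 * (\<Sum>i<N. \<Sum>j<N. a i j) = (\<Sum>i<N. \<Sum>j<N. a i j) + (\<Sum>i<N. \<Sum>j<N. a j i)"
    using sw by simp
  also have "\<dots> = (\<Sum>i<N. \<Sum>j<N. a i j + a j i)"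
    by (simp add: sum.distrib)
  also have "\<dots> = (\<Sum>i<N. \<Sum>j<N. - (psi (norm (x i t - x j t)) * inner (Gam (v j t - v i t)) (v j t - v i t)))"
    by (intro sum.cong refl) (rule aji)
  finally show ?thesis unfolding 1 by (simp add: sum_negf)
qed

lemma E_bound:
  assumes t: "t \<in> {0..<T}"
  shows "- (1 / real N) * (\<Sum>i<N. \<Sum>j<N. psi (norm (x i t - x j t)) * inner (Gam (v j t - v i t)) (v j t - v i t))
    \<le> - (C\<^sub>1 / real N) * (\<Sum>i<N. \<Sum>j\<in>{..<N} - {i}. psi (norm (x i t - x j t)) * norm (v j t - v i t) powr (2 * \<gamma>))"
proof -
  have "C\<^sub>1 * (\<Sum>j\<in>{..<N} - {i}. psi (norm (x i t - x j t)) * norm (v j t - v i t) powr (2 * \<gamma>))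
      \<le> (\<Sum>j<N. psi (norm (x i t - x j t)) * inner (Gam (v j t - v i t)) (v j t - v i t))" if i: "i < N" for i
  proof -
    have "C\<^sub>1 * (\<Sum>j\<in>{..<N} - {i}. psi (norm (x i t - x j t)) * norm (v j t - v i t) powr (2 * \<gamma>))
      = (\<Sum>j\<in>{..<N} - {i}. psi (norm (x i t - x j t)) * (C\<^sub>1 * norm (v j t - v i t) powr (2 * \<gamma>)))"
      by (simp add: sum_distrib_left algebra_simps)
    also have "\<dots> \<le> (\<Sum>j\<in>{..<N} - {i}. psi (norm (x i t - x j t)) * inner (Gam (v j t - v i t)) (v j t - v i t))"
    proof (rule sum_mono)
      fix j assume j: "j \<in> {..<N} - {i}"
      then have "x i t \<noteq> x j t" using noncoll[OF t i, of j] by auto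
      then have "psi (norm (x i t - x j t)) > 0" using psi_pos by auto
      then show "psi (norm (x i t - x j t)) * (C\<^sub>1 * norm (v j t - v i t) powr (2 * \<gamma>))
          \<le> psi (norm (x i t - x j t)) * inner (Gam (v j t - v i t)) (v j t - v i t)"
        using A2 by (intro mult_left_mono) auto
    qed
    also have "\<dots> = (\<Sum>j<N. psi (norm (x i t - x j t)) * inner (Gam (v j t - v i t)) (v j t - v i t))"
      using i by (simp add: sum.remove[of "{..<N}" i])
    finally show ?thesis .
  qed
  then have "(\<Sum>i<N. C\<^sub>1 * (\<Sum>j\<in>{..<N} - {i}. psi (norm (x i t - x j t)) * norm (v j t - v i t) powr (2 * \<gamma>)))
      \<le> (\<Sum>i<N. \<Sum>j<N. psi (norm (x i t - x j t)) * inner (Gam (v j t - v i t)) (v j t - v i t))"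
    by (intro sum_mono) auto
  then have "C\<^sub>1 * (\<Sum>i<N. \<Sum>j\<in>{..<N} - {i}. psi (norm (x i t - x j t)) * norm (v j t - v i t) powr (2 * \<gamma>))
      \<le> (\<Sum>i<N. \<Sum>j<N. psi (norm (x i t - x j t)) * inner (Gam (v j t - v i t)) (v j t - v i t))"
    by (simp only: sum_distrib_left)
  moreover have "real N > 0" using N2 by simp
  ultimately show ?thesis by (simp add: divide_simps)
qed


lemma pair_young:
  assumes s: "s > 0" and a: "a \<ge> 0"
  shows "\<bar>Psi s\<bar> powr (\<beta> - 1) * psi s * a - psi s * a powr (2 * \<gamma>) / (2 * \<gamma>)
           \<le> C * ((2 * \<gamma> - 1) / (2 * \<gamma>))"
proof -
  define g where "g = \<bar>Psi s\<bar>"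
  define q where "q = 2 * \<gamma> / (2 * \<gamma> - 1)"
  have g: "g > 0" using Psi_nz[OF s] by (simp add: g_def)
  have ps: "psi s > 0" using psi_pos s by auto
  have q1: "q > 1" using gamma by (simp add: q_def field_simps)
  have p1: "2 * \<gamma> > 1" using gamma by simp
  have pq: "1 / (2 * \<gamma>) + 1 / q = 1" using gamma by (simp add: q_def field_simps)
  have Y: "a * g powr (\<beta> - 1) \<le> a powr (2 * \<gamma>) / (2 * \<gamma>) + (g powr (\<beta> - 1)) powr q / q"
    by (rule Youngs_inequality[OF p1 q1 pq a]) simp
  have "psi s * (g powr (\<beta> - 1)) powr q = psi s * g powr ((\<beta> - 1) * q)"
    by (simp add: powr_powr)
  also have "\<dots> \<le> C * g powr ((1 - \<beta>) * q) * g powr ((\<beta> - 1) * q)"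
    using growth[rule_format, OF s] by (intro mult_right_mono) (simp_all add: g_def q_def)
  also have "\<dots> = C"
    using g by (simp add: mult.assoc flip: powr_add) (simp add: algebra_simps)
  finally have B: "psi s * (g powr (\<beta> - 1)) powr q \<le> C" .
  have "g powr (\<beta> - 1) * psi s * a = psi s * (a * g powr (\<beta> - 1))" by simp
  also have "\<dots> \<le> psi s * (a powr (2 * \<gamma>) / (2 * \<gamma>) + (g powr (\<beta> - 1)) powr q / q)"
    using Y ps by (intro mult_left_mono) auto
  also have "\<dots> = psi s * a powr (2 * \<gamma>) / (2 * \<gamma>) + (psi s * (g powr (\<beta> - 1)) powr q) / q"
    by (simp add: algebra_simps)
  also have "\<dots> \<le> psi s * a powr (2 * \<gamma>) / (2 * \<gamma>) + C / q"
    using B q1 by (simp add: divide_right_mono)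
  also have "C / q = C * ((2 * \<gamma> - 1) / (2 * \<gamma>))" by (simp add: q_def)
  finally show ?thesis by (simp add: g_def)
qed


lemma mono_bound:
  fixes f f' :: "real \<Rightarrow> real"
  assumes d: "\<And>s. s \<in> {0..<T} \<Longrightarrow> (f has_real_derivative f' s) (at s within {0..<T})"
    and b: "\<And>s. s \<in> {0..<T} \<Longrightarrow> f' s \<le> K"
    and t: "t \<in> {0..<T}"
  shows "f t \<le> f 0 + K * t"
proof (cases "t = 0")
  case True then show ?thesis by simp
next
  case False
  then have t0: "0 < t" using t by auto
  have "continuous_on {0..<T} f"
    unfolding continuous_on_eq_continuous_within using d DERIV_continuous by blast
  then have c: "continuous_on {0..t} f" by (rule continuous_on_subset) (use t in auto)
  have dz: "(f has_real_derivative f' z) (at z)" if "0 < z" "z < t" for z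
  proof -
    have "z \<in> interior {0..<T}" using that t by auto
    then have "at z within {0..<T} = at z" by (rule at_within_interior)
    with d[of z] that t show ?thesis by auto
  qed
  obtain l z where z: "0 < z" "z < t" "(f has_real_derivative l) (at z)" "f t - f 0 = (t - 0) * l"
    using MVT[OF t0 c] dz real_differentiable_def by blast
  have "l = f' z" using DERIV_unique z dz by blast
  then have "l \<le> K" using b[of z] z t by auto
  then have "l * t \<le> K * t" using t0 by (intro mult_right_mono) auto
  moreover have "f t - f 0 = l * t" using z(4) by simp
  ultimately show ?thesis by (simp add: algebra_simps)
qed

lemma combine:
  fixes \<phi> :: "nat \<Rightarrow> nat \<Rightarrow> real \<Rightarrow> real" and c :: real
  assumes c: "c > 0"
    and pd: "\<And>i j t. i < N \<Longrightarrow> j < N \<Longrightarrow> i \<noteq> j \<Longrightarrow> t \<in> {0..<T} \<Longrightarrow>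
      \<exists>D. (\<phi> i j has_real_derivative D) (at t within {0..<T}) \<and>
          D \<le> c * (\<bar>Psi (norm (x i t - x j t))\<bar> powr (\<beta> - 1) * psi (norm (x i t - x j t)) * norm (v j t - v i t))"
    and t: "t \<in> {0..<T}"
  shows "1 / (real N * (real N - 1)) * (\<Sum>i<N. \<Sum>j\<in>{..<N} - {i}. \<phi> i j t)
           + c / (2 * C\<^sub>1 * \<gamma> * (real N - 1)) * (\<Sum>i<N. (norm (v i t))\<^sup>2)
         \<le> (1 / (real N * (real N - 1)) * (\<Sum>i<N. \<Sum>j\<in>{..<N} - {i}. \<phi> i j 0)
           + c / (2 * C\<^sub>1 * \<gamma> * (real N - 1)) * (\<Sum>i<N. (norm (v i 0))\<^sup>2))
           + c * C * ((2 * \<gamma> - 1) / (2 * \<gamma>)) * t"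
proof -
  define A where "A = 1 / (real N * (real N - 1))"
  define B where "B = c / (2 * C\<^sub>1 * \<gamma> * (real N - 1))"
  define D where "D i j s = (SOME D. (\<phi> i j has_real_derivative D) (at s within {0..<T}) \<and>
          D \<le> c * (\<bar>Psi (norm (x i s - x j s))\<bar> powr (\<beta> - 1) * psi (norm (x i s - x j s)) * norm (v j s - v i s)))" for i j s
  have Dp: "(\<phi> i j has_real_derivative D i j s) (at s within {0..<T}) \<and>
          D i j s \<le> c * (\<bar>Psi (norm (x i s - x j s))\<bar> powr (\<beta> - 1) * psi (norm (x i s - x j s)) * norm (v j s - v i s))"
    if "i < N" "j < N" "i \<noteq> j" "s \<in> {0..<T}" for i j s
    unfolding D_def by (rule someI_ex) (rule pd[OF that])
  define Y where "Y i j s = \<bar>Psi (norm (x i s - x j s))\<bar> powr (\<beta> - 1) * psi (norm (x i s - x j s)) * norm (v j s - v i s)" for i j s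
  define Z where "Z i j s = psi (norm (x i s - x j s)) * norm (v j s - v i s) powr (2 * \<gamma>)" for i j s
  define K where "K = c * C * ((2 * \<gamma> - 1) / (2 * \<gamma>))"
  define F' where "F' s = A * (\<Sum>i<N. \<Sum>j\<in>{..<N} - {i}. D i j s)
      + B * (\<Sum>i<N. 2 * inner (v i s) (CS_force N psi Gam x v i s))" for s
  have N1: "real N - 1 > 0" and N0: "real N > 0" using N2 by auto
  have gp: "\<gamma> > 0" using gamma by simp
  have Bnn: "B \<ge> 0" using c C1_pos gp N1 by (simp add: B_def)
  have BA: "B * (C\<^sub>1 / real N) = A * c / (2 * \<gamma>)"
    using C1_pos gp N1 N0 by (simp add: A_def B_def field_simps)
  have der: "((\<lambda>s. A * (\<Sum>i<N. \<Sum>j\<in>{..<N} - {i}. \<phi> i j s) + B * (\<Sum>i<N. (norm (v i s))\<^sup>2))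
      has_real_derivative F' s) (at s within {0..<T})" if s: "s \<in> {0..<T}" for s
    unfolding F'_def
    by (intro DERIV_add DERIV_cmult DERIV_sum E_der[OF s]) (use Dp s in auto)
  have bnd: "F' s \<le> K" if s: "s \<in> {0..<T}" for s
  proof -
    have 1: "A * (\<Sum>i<N. \<Sum>j\<in>{..<N} - {i}. D i j s) \<le> A * (\<Sum>i<N. \<Sum>j\<in>{..<N} - {i}. c * Y i j s)"
      using N1 N0 Dp s by (intro mult_left_mono sum_mono) (auto simp: A_def Y_def)
    have 2: "B * (\<Sum>i<N. 2 * inner (v i s) (CS_force N psi Gam x v i s))
        \<le> B * (- (C\<^sub>1 / real N) * (\<Sum>i<N. \<Sum>j\<in>{..<N} - {i}. Z i j s))"
      unfolding E_ident Z_def using E_bound[OF s] Bnn by (intro mult_left_mono) auto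
    have 3: "A * (\<Sum>i<N. \<Sum>j\<in>{..<N} - {i}. c * Y i j s) + B * (- (C\<^sub>1 / real N) * (\<Sum>i<N. \<Sum>j\<in>{..<N} - {i}. Z i j s))
        = A * c * (\<Sum>i<N. \<Sum>j\<in>{..<N} - {i}. Y i j s - Z i j s / (2 * \<gamma>))"
    proof -
      have "B * (- (C\<^sub>1 / real N) * (\<Sum>i<N. \<Sum>j\<in>{..<N} - {i}. Z i j s))
          = - (A * c * (\<Sum>i<N. \<Sum>j\<in>{..<N} - {i}. Z i j s / (2 * \<gamma>)))"
      proof -
        have "B * (C\<^sub>1 / real N) * (\<Sum>i<N. \<Sum>j\<in>{..<N} - {i}. Z i j s) = A * c / (2 * \<gamma>) * (\<Sum>i<N. \<Sum>j\<in>{..<N} - {i}. Z i j s)"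
          using BA by simp
        then show ?thesis by (simp add: sum_divide_distrib[symmetric] algebra_simps)
      qed
      then show ?thesis
        by (simp add: sum_subtractf sum_distrib_left algebra_simps)
    qed
    have 4: "(\<Sum>i<N. \<Sum>j\<in>{..<N} - {i}. Y i j s - Z i j s / (2 * \<gamma>))
        \<le> (\<Sum>i<N. \<Sum>j\<in>{..<N} - {i}. C * ((2 * \<gamma> - 1) / (2 * \<gamma>)))"
    proof (intro sum_mono)
      fix i j assume i: "i \<in> {..<N}" and j: "j \<in> {..<N} - {i}"
      have "x i s \<noteq> x j s" using noncoll[OF s, of i j] i j by auto
      then have "norm (x i s - x j s) > 0" by simp
      from pair_young[OF this norm_ge_zero, of "v j s - v i s"]
      show "Y i j s - Z i j s / (2 * \<gamma>) \<le> C * ((2 * \<gamma> - 1) / (2 * \<gamma>))"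
        by (simp add: Y_def Z_def)
    qed
    have 5: "(\<Sum>i<N. \<Sum>j\<in>{..<N} - {i}. C * ((2 * \<gamma> - 1) / (2 * \<gamma>)))
        = real N * (real N - 1) * (C * ((2 * \<gamma> - 1) / (2 * \<gamma>)))"
      using N2 by (simp add: card_Diff_singleton of_nat_diff)
    have Ac: "A * c \<ge> 0" using c N1 N0 by (simp add: A_def)
    have "F' s \<le> A * c * (\<Sum>i<N. \<Sum>j\<in>{..<N} - {i}. Y i j s - Z i j s / (2 * \<gamma>))"
      using 1 2 3 unfolding F'_def by linarith
    also have "\<dots> \<le> A * c * (real N * (real N - 1) * (C * ((2 * \<gamma> - 1) / (2 * \<gamma>))))"
      using mult_left_mono[OF 4 Ac] 5 by simp
    also have "\<dots> = K" using N1 N0 by (simp add: A_def K_def)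
    finally show ?thesis .
  qed
  from mono_bound[OF der bnd t] show ?thesis by (simp add: A_def B_def K_def)
qed


lemma pd_beta:
  assumes ij: "i < N" "j < N" "i \<noteq> j" and t: "t \<in> {0..<T}"
  shows "\<exists>D. ((\<lambda>t. \<bar>Psi (norm (x i t - x j t))\<bar> powr \<beta>) has_real_derivative D) (at t within {0..<T}) \<and>
          D \<le> \<beta> * (\<bar>Psi (norm (x i t - x j t))\<bar> powr (\<beta> - 1) * psi (norm (x i t - x j t)) * norm (v j t - v i t))"
proof -
  note g = g_der[OF ij t]
  have "((\<lambda>t. \<bar>Psi (norm (x i t - x j t))\<bar> powr \<beta>) has_real_derivative
     (\<beta> * \<bar>Psi (norm (x i t - x j t))\<bar> powr (\<beta> - 1)) *
       (- (psi (norm (x i t - x j t)) * (inner (x i t - x j t) (v i t - v j t) / norm (x i t - x j t)))))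
     (at t within {0..<T})"
    by (rule DERIV_chain2[OF has_real_derivative_powr[OF g(3)] g(1)])
  moreover have "(\<beta> * \<bar>Psi (norm (x i t - x j t))\<bar> powr (\<beta> - 1)) *
       (- (psi (norm (x i t - x j t)) * (inner (x i t - x j t) (v i t - v j t) / norm (x i t - x j t))))
     \<le> (\<beta> * \<bar>Psi (norm (x i t - x j t))\<bar> powr (\<beta> - 1)) * (psi (norm (x i t - x j t)) * norm (v j t - v i t))"
    using g(2) beta by (intro mult_left_mono) auto
  ultimately show ?thesis by (auto simp: algebra_simps)
qed

lemma pd_zero:
  assumes ij: "i < N" "j < N" "i \<noteq> j" and t: "t \<in> {0..<T}" and b0: "\<beta> = 0"
  shows "\<exists>D. ((\<lambda>t. ln \<bar>Psi (norm (x i t - x j t))\<bar>) has_real_derivative D) (at t within {0..<T}) \<and>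
          D \<le> 1 * (\<bar>Psi (norm (x i t - x j t))\<bar> powr (\<beta> - 1) * psi (norm (x i t - x j t)) * norm (v j t - v i t))"
proof -
  note g = g_der[OF ij t]
  have "((\<lambda>t. ln \<bar>Psi (norm (x i t - x j t))\<bar>) has_real_derivative
     (1 / \<bar>Psi (norm (x i t - x j t))\<bar>) *
       (- (psi (norm (x i t - x j t)) * (inner (x i t - x j t) (v i t - v j t) / norm (x i t - x j t)))))
     (at t within {0..<T})"
    by (rule DERIV_chain2[OF DERIV_ln_divide[OF g(3)] g(1)])
  moreover have "(1 / \<bar>Psi (norm (x i t - x j t))\<bar>) *
       (- (psi (norm (x i t - x j t)) * (inner (x i t - x j t) (v i t - v j t) / norm (x i t - x j t))))
     \<le> (1 / \<bar>Psi (norm (x i t - x j t))\<bar>) * (psi (norm (x i t - x j t)) * norm (v j t - v i t))"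
    using g(2) g(3) by (intro mult_left_mono) auto
  moreover have "\<bar>Psi (norm (x i t - x j t))\<bar> powr (\<beta> - 1) = 1 / \<bar>Psi (norm (x i t - x j t))\<bar>"
    using g(3) b0 by (simp add: powr_minus_divide)
  ultimately show ?thesis by (auto simp: algebra_simps)
qed

lemma main_beta:
  assumes bp: "\<beta> > 0" and t: "t \<in> {0..<T}"
  shows "L_beta \<beta> N Psi x t + \<beta> / (2 * C\<^sub>1 * \<gamma> * (real N - 1)) * (\<Sum>i<N. (norm (v i t))\<^sup>2)
          \<le> C * ((2 * \<gamma> - 1) * \<beta> / (2 * \<gamma>)) * t + L_beta \<beta> N Psi x 0
             + \<beta> / (2 * C\<^sub>1 * \<gamma> * (real N - 1)) * (\<Sum>i<N. (norm (v i 0))\<^sup>2)"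
  using combine[of \<beta> "\<lambda>i j t. \<bar>Psi (norm (x i t - x j t))\<bar> powr \<beta>", OF bp pd_beta t]
  unfolding L_beta_def by (simp add: algebra_simps)

lemma main_zero:
  assumes b0: "\<beta> = 0" and t: "t \<in> {0..<T}"
  shows "L_zero N Psi x t + 1 / (2 * C\<^sub>1 * \<gamma> * (real N - 1)) * (\<Sum>i<N. (norm (v i t))\<^sup>2)
          \<le> C * ((2 * \<gamma> - 1) / (2 * \<gamma>)) * t + L_zero N Psi x 0
             + 1 / (2 * C\<^sub>1 * \<gamma> * (real N - 1)) * (\<Sum>i<N. (norm (v i 0))\<^sup>2)"
  using combine[of 1 "\<lambda>i j t. ln \<bar>Psi (norm (x i t - x j t))\<bar>", OF _ pd_zero t] b0
  unfolding L_zero_def by (simp add: algebra_simps)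


lemma single_le:
  fixes \<phi> :: "nat \<Rightarrow> nat \<Rightarrow> real"
  assumes ij: "i < N" "j < N" "i \<noteq> j" and lo: "\<And>k l. k < N \<Longrightarrow> l < N \<Longrightarrow> k \<noteq> l \<Longrightarrow> lo \<le> \<phi> k l"
  shows "\<phi> i j \<le> (\<Sum>k<N. \<Sum>l\<in>{..<N} - {k}. \<phi> k l) - real N * (real N - 1) * lo + lo"
proof -
  have "\<phi> i j - lo \<le> (\<Sum>l\<in>{..<N} - {i}. \<phi> i l - lo)"
    by (rule member_le_sum[where f="\<lambda>l. \<phi> i l - lo"]) (use ij lo in auto)
  also have "\<dots> \<le> (\<Sum>k<N. \<Sum>l\<in>{..<N} - {k}. \<phi> k l - lo)"
  proof (rule member_le_sum[where f="\<lambda>k. \<Sum>l\<in>{..<N} - {k}. \<phi> k l - lo"])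
    fix k assume k: "k \<in> {..<N} - {i}"
    show "0 \<le> (\<Sum>l\<in>{..<N} - {k}. \<phi> k l - lo)"
    proof (rule sum_nonneg)
      fix l assume "l \<in> {..<N} - {k}"
      then show "0 \<le> \<phi> k l - lo" using lo[of k l] k by auto
    qed
  qed (use ij in auto)
  also have "\<dots> = (\<Sum>k<N. \<Sum>l\<in>{..<N} - {k}. \<phi> k l) - real N * (real N - 1) * lo"
    using N2 by (simp add: sum_subtractf card_Diff_singleton of_nat_diff)
  finally show ?thesis by simp
qed

lemma sep_from_bound:
  assumes M: "\<And>t i j. t \<in> {0..<T} \<Longrightarrow> i < N \<Longrightarrow> j < N \<Longrightarrow> i \<noteq> j \<Longrightarrow> \<bar>Psi (norm (x i t - x j t))\<bar> \<le> M"
  shows "\<exists>\<delta>>0. \<forall>t\<in>{0..<T}. \<forall>i<N. \<forall>j<N. i \<noteq> j \<longrightarrow> \<delta> \<le> norm (x i t - x j t)"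
proof -
  have "\<forall>\<^sub>F r in at_right 0. \<bar>Psi r\<bar> > M"
    using Psi_sing by (simp add: filterlim_at_top_dense)
  then obtain b where b: "b > 0" "\<And>r. r > 0 \<Longrightarrow> r < b \<Longrightarrow> \<bar>Psi r\<bar> > M"
    unfolding eventually_at_right_field by auto
  show ?thesis
  proof (intro exI[of _ b] conjI ballI allI impI)
    fix t i j assume t: "t \<in> {0..<T}" and i: "i < N" and j: "j < N" and ij: "i \<noteq> j"
    have "norm (x i t - x j t) > 0" using noncoll[OF t i j ij] by simp
    show "b \<le> norm (x i t - x j t)"
    proof (rule ccontr)
      assume "\<not> b \<le> norm (x i t - x j t)"
      then have "\<bar>Psi (norm (x i t - x j t))\<bar> > M" using b(2) \<open>norm (x i t - x j t) > 0\<close> by simp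
      with M[OF t i j ij] show False by simp
    qed
  qed (rule b(1))
qed

lemma energy_decay:
  assumes t: "t \<in> {0..<T}"
  shows "(\<Sum>i<N. (norm (v i t))\<^sup>2) \<le> (\<Sum>i<N. (norm (v i 0))\<^sup>2)"
proof -
  have "(\<Sum>i<N. 2 * inner (v i s) (CS_force N psi Gam x v i s)) \<le> 0" if s: "s \<in> {0..<T}" for s
  proof -
    have "0 \<le> (\<Sum>i<N. \<Sum>j\<in>{..<N} - {i}. psi (norm (x i s - x j s)) * norm (v j s - v i s) powr (2 * \<gamma>))"
    proof (intro sum_nonneg)
      fix i j assume "i \<in> {..<N}" "j \<in> {..<N} - {i}"
      then have "norm (x i s - x j s) > 0" using noncoll[OF s, of i j] by auto
      then have "psi (norm (x i s - x j s)) > 0" using psi_pos by auto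
      then show "0 \<le> psi (norm (x i s - x j s)) * norm (v j s - v i s) powr (2 * \<gamma>)" by simp
    qed
    moreover have "C\<^sub>1 / real N > 0" using C1_pos N2 by simp
    ultimately have "0 \<le> (C\<^sub>1 / real N) * (\<Sum>i<N. \<Sum>j\<in>{..<N} - {i}. psi (norm (x i s - x j s)) * norm (v j s - v i s) powr (2 * \<gamma>))"
      by (intro mult_nonneg_nonneg) auto
    then have "- (C\<^sub>1 / real N) * (\<Sum>i<N. \<Sum>j\<in>{..<N} - {i}. psi (norm (x i s - x j s)) * norm (v j s - v i s) powr (2 * \<gamma>)) \<le> 0"
      by linarith
    then show ?thesis unfolding E_ident using E_bound[OF s] by linarith
  qed
  from mono_bound[OF E_der this t] show ?thesis by simp
qed

lemma pos_bound:
  assumes t: "t \<in> {0..<T}" and i: "i < N"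
  shows "norm (x i t - x i 0) \<le> sqrt (\<Sum>k<N. (norm (v k 0))\<^sup>2) * T"
proof -
  define V where "V = sqrt (\<Sum>k<N. (norm (v k 0))\<^sup>2)"
  have vb: "norm (v i s) \<le> V" if s: "s \<in> {0..<T}" for s
  proof -
    have "(norm (v i s))\<^sup>2 \<le> (\<Sum>k<N. (norm (v k s))\<^sup>2)"
      by (rule member_le_sum[where f="\<lambda>k. (norm (v k s))\<^sup>2"]) (use i in auto)
    also have "\<dots> \<le> (\<Sum>k<N. (norm (v k 0))\<^sup>2)" by (rule energy_decay[OF s])
    finally show ?thesis unfolding V_def using real_le_rsqrt by blast
  qed
  have "norm (x i t - x i 0) \<le> V * norm (t - 0)"
  proof (rule differentiable_bound[where f'="\<lambda>s h. h *\<^sub>R v i s"])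
    show "convex {0..<T}" by (rule convex_real_interval)
    show "(x i has_derivative (\<lambda>h. h *\<^sub>R v i s)) (at s within {0..<T})" if "s \<in> {0..<T}" for s
      using xder[OF i that] unfolding has_vector_derivative_def .
    show "onorm (\<lambda>h. h *\<^sub>R v i s) \<le> V" if "s \<in> {0..<T}" for s
      using vb[OF that] by (simp add: onorm_scaleR_left[OF bounded_linear_ident] onorm_id)
  qed (use t T_pos in auto)
  also have "\<dots> \<le> V * T" using t by (intro mult_left_mono) (auto simp: V_def intro!: sum_nonneg)
  finally show ?thesis by (simp add: V_def)
qed


lemma separation:
  "\<exists>\<delta>>0. \<forall>t\<in>{0..<T}. \<forall>i<N. \<forall>j<N. i \<noteq> j \<longrightarrow> \<delta> \<le> norm (x i t - x j t)"
proof -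
  have N1: "real N - 1 > 0" and N0: "real N > 0" using N2 by auto
  have gp: "\<gamma> > 0" using gamma by simp
  have E0: "0 \<le> (\<Sum>i<N. (norm (v i t))\<^sup>2)" for t by (intro sum_nonneg) auto
  show ?thesis
  proof (cases "\<beta> > 0")
    case True
    define B where "B = \<beta> / (2 * C\<^sub>1 * \<gamma> * (real N - 1))"
    define K where "K = C * ((2 * \<gamma> - 1) * \<beta> / (2 * \<gamma>))"
    define R0 where "R0 = L_beta \<beta> N Psi x 0 + B * (\<Sum>i<N. (norm (v i 0))\<^sup>2)"
    define M0 where "M0 = real N * (real N - 1) * (K * T + R0)"
    have Bn: "B \<ge> 0" using True C1_pos gp N1 by (simp add: B_def)
    have Kn: "K \<ge> 0" using True C_pos gamma by (simp add: K_def)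
    have M: "\<bar>Psi (norm (x i t - x j t))\<bar> \<le> M0 powr (1 / \<beta>)"
      if t: "t \<in> {0..<T}" and ij: "i < N" "j < N" "i \<noteq> j" for t i j
    proof -
      have "L_beta \<beta> N Psi x t + B * (\<Sum>i<N. (norm (v i t))\<^sup>2) \<le> K * t + R0"
        using main_beta[OF True t] by (simp add: B_def K_def R0_def)
      moreover have "B * (\<Sum>i<N. (norm (v i t))\<^sup>2) \<ge> 0" using Bn E0 by simp
      moreover have "K * t \<le> K * T" using Kn t by (intro mult_left_mono) auto
      ultimately have Lb: "L_beta \<beta> N Psi x t \<le> K * T + R0" by linarith
      have "(\<Sum>k<N. \<Sum>l\<in>{..<N} - {k}. \<bar>Psi (norm (x k t - x l t))\<bar> powr \<beta>) = real N * (real N - 1) * L_beta \<beta> N Psi x t"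
        using N1 N0 by (simp add: L_beta_def)
      also have "\<dots> \<le> M0" unfolding M0_def using Lb N1 N0 by (intro mult_left_mono) auto
      finally have S: "(\<Sum>k<N. \<Sum>l\<in>{..<N} - {k}. \<bar>Psi (norm (x k t - x l t))\<bar> powr \<beta>) \<le> M0" .
      have "\<bar>Psi (norm (x i t - x j t))\<bar> powr \<beta> \<le> M0"
        using single_le[OF ij, of 0 "\<lambda>k l. \<bar>Psi (norm (x k t - x l t))\<bar> powr \<beta>"] S by simp
      then have "(\<bar>Psi (norm (x i t - x j t))\<bar> powr \<beta>) powr (1 / \<beta>) \<le> M0 powr (1 / \<beta>)"
        using True by (intro powr_mono2) auto
      then show ?thesis using True by (simp add: powr_powr)
    qed
    show ?thesis by (rule sep_from_bound[OF M])
  next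
    case False
    then have b0: "\<beta> = 0" using beta by simp
    define B where "B = 1 / (2 * C\<^sub>1 * \<gamma> * (real N - 1))"
    define K where "K = C * ((2 * \<gamma> - 1) / (2 * \<gamma>))"
    define R0 where "R0 = L_zero N Psi x 0 + B * (\<Sum>i<N. (norm (v i 0))\<^sup>2)"
    define V where "V = sqrt (\<Sum>k<N. (norm (v k 0))\<^sup>2)"
    define Rx where "Rx = (\<Sum>k<N. \<Sum>l<N. norm (x k 0 - x l 0))"
    define R where "R = 2 * (V * T) + Rx + 1"
    define G where "G = - Psi R"
    have Rx0: "0 \<le> Rx" unfolding Rx_def by (intro sum_nonneg) auto
    have V0: "0 \<le> V" unfolding V_def by (intro real_sqrt_ge_zero sum_nonneg) auto
    have Rp: "R > 0" unfolding R_def using Rx0 V0 T_pos by (simp add: add_nonneg_pos)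
    have Gp: "G > 0" unfolding G_def using Psi_neg[OF Rp] by simp
    define M1 where "M1 = real N * (real N - 1) * (K * T + R0) - real N * (real N - 1) * ln G + ln G"
    have Bn: "B \<ge> 0" using C1_pos gp N1 by (simp add: B_def)
    have Kn: "K \<ge> 0" using C_pos gamma by (simp add: K_def)
    have lo: "ln G \<le> ln \<bar>Psi (norm (x k t - x l t))\<bar>"
      if t: "t \<in> {0..<T}" and kl: "k < N" "l < N" "k \<noteq> l" for t k l
    proof -
      have rp: "norm (x k t - x l t) > 0" using noncoll[OF t kl] by simp
      have "norm (x k t - x l t) \<le> norm (x k t - x k 0) + norm (x k 0 - x l 0) + norm (x l 0 - x l t)"
        using norm_triangle_ineq[of "x k t - x k 0" "x k 0 - x l 0"]
              norm_triangle_ineq[of "x k t - x k 0 + (x k 0 - x l 0)" "x l 0 - x l t"]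
        by (simp add: algebra_simps)
      moreover have "norm (x k t - x k 0) \<le> V * T" using pos_bound[OF t kl(1)] by (simp add: V_def)
      moreover have "norm (x l 0 - x l t) \<le> V * T" using pos_bound[OF t kl(2)] by (simp add: V_def norm_minus_commute)
      moreover have "norm (x k 0 - x l 0) \<le> Rx"
      proof -
        have "norm (x k 0 - x l 0) \<le> (\<Sum>l'<N. norm (x k 0 - x l' 0))"
          by (rule member_le_sum[where f="\<lambda>l'. norm (x k 0 - x l' 0)"]) (use kl in auto)
        also have "\<dots> \<le> Rx" unfolding Rx_def
          by (rule member_le_sum[where f="\<lambda>k'. \<Sum>l'<N. norm (x k' 0 - x l' 0)"])
             (use kl in \<open>auto intro!: sum_nonneg\<close>)
        finally show ?thesis .
      qed
      ultimately have "norm (x k t - x l t) \<le> R" unfolding R_def by linarith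
      then have "Psi (norm (x k t - x l t)) \<le> Psi R" using Psi_mono rp by auto
      then have "G \<le> \<bar>Psi (norm (x k t - x l t))\<bar>" unfolding G_def using Psi_neg[OF rp] by simp
      then show ?thesis using Gp by simp
    qed
    have M: "\<bar>Psi (norm (x i t - x j t))\<bar> \<le> exp M1"
      if t: "t \<in> {0..<T}" and ij: "i < N" "j < N" "i \<noteq> j" for t i j
    proof -
      have "L_zero N Psi x t + B * (\<Sum>i<N. (norm (v i t))\<^sup>2) \<le> K * t + R0"
        using main_zero[OF b0 t] by (simp add: B_def K_def R0_def)
      moreover have "B * (\<Sum>i<N. (norm (v i t))\<^sup>2) \<ge> 0" using Bn E0 by simp
      moreover have "K * t \<le> K * T" using Kn t by (intro mult_left_mono) auto
      ultimately have Lb: "L_zero N Psi x t \<le> K * T + R0" by linarith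
      have "(\<Sum>k<N. \<Sum>l\<in>{..<N} - {k}. ln \<bar>Psi (norm (x k t - x l t))\<bar>) = real N * (real N - 1) * L_zero N Psi x t"
        using N1 N0 by (simp add: L_zero_def)
      also have "\<dots> \<le> real N * (real N - 1) * (K * T + R0)" using Lb N1 N0 by (intro mult_left_mono) auto
      finally have S: "(\<Sum>k<N. \<Sum>l\<in>{..<N} - {k}. ln \<bar>Psi (norm (x k t - x l t))\<bar>) \<le> real N * (real N - 1) * (K * T + R0)" .
      have "ln \<bar>Psi (norm (x i t - x j t))\<bar> \<le> M1"
        using single_le[OF ij, of "ln G" "\<lambda>k l. ln \<bar>Psi (norm (x k t - x l t))\<bar>"] S lo[OF t]
        unfolding M1_def by force
      moreover have "\<bar>Psi (norm (x i t - x j t))\<bar> > 0" using g_der(3)[OF ij t] .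
      ultimately show ?thesis by (metis exp_le_cancel_iff exp_ln)
    qed
    show ?thesis by (rule sep_from_bound[OF M])
  qed
qed

end

theorem theorem3:
  fixes N :: nat and \<gamma> C\<^sub>1 C \<beta> T :: real
    and Gam :: "'a::euclidean_space \<Rightarrow> 'a"
    and psi Psi :: "real \<Rightarrow> real"
    and x v :: "nat \<Rightarrow> real \<Rightarrow> 'a"
  assumes N2: "N \<ge> 2"
    and gamma: "\<gamma> > 1/2"
    and C1_pos: "C\<^sub>1 > 0"
    and A1: "\<forall>w. Gam (- w) = - Gam w"
    and A2: "\<forall>w. inner (Gam w) w \<ge> C\<^sub>1 * norm w powr (2 * \<gamma>)"
    and psi_pos: "\<forall>s>0. psi s > 0"
    and psi_noninc: "\<forall>s r. 0 < s \<longrightarrow> s \<le> r \<longrightarrow> psi r \<le> psi s"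
    and Psi_prim: "\<forall>s>0. (Psi has_real_derivative psi s) (at s)"
    and Psi_sing: "filterlim (\<lambda>s. \<bar>Psi s\<bar>) at_top (at_right 0)"
    and C_pos: "C > 0"
    and beta: "0 \<le> \<beta>" "\<beta> < 1"
    and growth: "\<forall>s>0. psi s \<le> C * \<bar>Psi s\<bar> powr ((1 - \<beta>) * (2 * \<gamma>) / (2 * \<gamma> - 1))"
    and T_pos: "T > 0"
    and sol: "CS_solution N psi Gam T x v"
  shows "(\<exists>\<delta>>0. \<forall>t\<in>{0..<T}. \<forall>i<N. \<forall>j<N. i \<noteq> j \<longrightarrow> \<delta> \<le> norm (x i t - x j t))
    \<and> (\<beta> > 0 \<longrightarrow> (\<forall>t\<in>{0..<T}.
          L_beta \<beta> N Psi x t + \<beta> / (2 * C\<^sub>1 * \<gamma> * (real N - 1)) * (\<Sum>i<N. (norm (v i t))\<^sup>2)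
          \<le> C * ((2 * \<gamma> - 1) * \<beta> / (2 * \<gamma>)) * t + L_beta \<beta> N Psi x 0
             + \<beta> / (2 * C\<^sub>1 * \<gamma> * (real N - 1)) * (\<Sum>i<N. (norm (v i 0))\<^sup>2)))
    \<and> (\<beta> = 0 \<longrightarrow> (\<forall>t\<in>{0..<T}.
          L_zero N Psi x t + 1 / (2 * C\<^sub>1 * \<gamma> * (real N - 1)) * (\<Sum>i<N. (norm (v i t))\<^sup>2)
          \<le> C * ((2 * \<gamma> - 1) / (2 * \<gamma>)) * t + L_zero N Psi x 0
             + 1 / (2 * C\<^sub>1 * \<gamma> * (real N - 1)) * (\<Sum>i<N. (norm (v i 0))\<^sup>2)))"
proof -
  interpret cs N \<gamma> C\<^sub>1 C \<beta> T Gam psi Psi x v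
    by unfold_locales (use assms in auto)
  show ?thesis using separation main_beta main_zero by blast
qed

end
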